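(* Let $B$ be a finite Blaschke product of degree $n\ge 1$, and let $M=M(B)$, $m=m(B)$. Then \[ \frac{n}{M-n+1}\le m\le n-1+\frac{n}{M} \qquad\text{and}\qquad 0<m\le n\le M . \]
   Context: A finite Blaschke product of degree $n$ is a function $B(z)=\alpha\prod_{k=1}^n \frac{z-a_k}{1-\overline{a_k}z}$ with $a_1,\dots,a_n\in\mathbb D=\{|z|<1\}$ and $\alpha\in\mathbb T=\{|z|=1\}$. For such $B$, $M(B)=\sup_{|z|=1}|B'(z)|$ and $m(B)=\inf_{|z|=1}|B'(z)|$. *)

theory Defs
  imports "HOL-Complex_Analysis.Complex_Analysis"
begin

definition blaschke :: "complex \<Rightarrow> complex list \<Rightarrow> complex \<Rightarrow> complex" where
  "blaschke \<alpha> a z = \<alpha> * (\<Prod>k<length a. (z - a ! k) / (1 - cnj (a ! k) * z))"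

definition is_blaschke :: "complex \<Rightarrow> complex list \<Rightarrow> bool" where
  "is_blaschke \<alpha> a \<longleftrightarrow> norm \<alpha> = 1 \<and> (\<forall>k<length a. norm (a ! k) < 1)"

definition blaschke_M :: "(complex \<Rightarrow> complex) \<Rightarrow> real" where
  "blaschke_M B = (SUP z\<in>sphere 0 1. norm (deriv B z))"

definition blaschke_m :: "(complex \<Rightarrow> complex) \<Rightarrow> real" where
  "blaschke_m B = (INF z\<in>sphere 0 1. norm (deriv B z))"

end

theory Submission
  imports Defs "HOL-Computational_Algebra.Polynomial" "HOL-Computational_Algebra.Fundamental_Theorem_Algebra"
begin


lemma lagrange_sum_zero:
  fixes R :: "complex set" and p :: "complex poly"
  assumes fin: "finite R" and deg: "degree p + 2 \<le> card R"
  shows "(\<Sum>x\<in>R. poly p x / (\<Prod>y\<in>R-{x}. (x - y))) = 0"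
proof -
  define c where "c x = poly p x / (\<Prod>y\<in>R-{x}. (x - y))" for x
  define L where "L = (\<Sum>x\<in>R. smult (c x) (\<Prod>y\<in>R-{x}. [:-y,1:]))"
  have degprod: "degree (\<Prod>y\<in>R-{x}. [:-y,1:]) = card R - 1" if "x \<in> R" for x
    using fin that by (subst degree_prod_sum_eq) (auto simp: card_Diff_singleton)
  have lcprod: "lead_coeff (\<Prod>y\<in>R-{x}. [:-y,1:]) = 1" for x
    by (simp add: lead_coeff_prod)
  have polyL: "poly L z = poly p z" if "z \<in> R" for z
  proof -
    have "poly L z = (\<Sum>x\<in>R. c x * (\<Prod>y\<in>R-{x}. (z - y)))"
      by (simp add: L_def poly_sum poly_prod)
    also have "\<dots> = c z * (\<Prod>y\<in>R-{z}. (z - y)) + (\<Sum>x\<in>R-{z}. c x * (\<Prod>y\<in>R-{x}. (z - y)))"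
      using fin that by (simp add: sum.remove)
    also have "(\<Sum>x\<in>R-{z}. c x * (\<Prod>y\<in>R-{x}. (z - y))) = 0"
      using fin that by (intro sum.neutral) (auto simp: prod_zero_iff)
    also have "(\<Prod>y\<in>R-{z}. (z - y)) \<noteq> 0"
      using fin by (auto simp: prod_zero_iff)
    hence "c z * (\<Prod>y\<in>R-{z}. (z - y)) = poly p z" by (simp add: c_def)
    finally show ?thesis by simp
  qed
  have degL: "degree L \<le> card R - 1"
    unfolding L_def using fin
    by (intro degree_sum_le) (auto intro: order.trans[OF degree_smult_le] simp: degprod)
  have "L = p"
    using deg degL by (intro poly_eqI_degree[of R]) (auto simp: polyL)
  hence "coeff L (card R - 1) = coeff p (card R - 1)" by simp
  also have "coeff p (card R - 1) = 0"
    using deg by (intro coeff_eq_0) linarith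
  also have "coeff L (card R - 1) = (\<Sum>x\<in>R. c x)"
    unfolding L_def coeff_sum
  proof (intro sum.cong refl)
    fix x assume "x \<in> R"
    hence "coeff (\<Prod>y\<in>R-{x}. [:-y,1:]) (card R - 1) = 1"
      using degprod[of x] lcprod[of x] by simp
    thus "coeff (smult (c x) (\<Prod>y\<in>R-{x}. [:-y,1:])) (card R - 1) = c x" by simp
  qed
  finally show ?thesis by (simp add: c_def)
qed



definition Ap :: "complex list \<Rightarrow> complex \<Rightarrow> complex" where
  "Ap a z = (\<Prod>k<length a. (z - a ! k))"
definition Dp :: "complex list \<Rightarrow> complex \<Rightarrow> complex" where
  "Dp a z = (\<Prod>k<length a. (1 - cnj (a ! k) * z))"
definition Pk :: "complex list \<Rightarrow> complex \<Rightarrow> real" where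
  "Pk a z = (\<Sum>k<length a. (1 - (cmod (a ! k))\<^sup>2) / (cmod (z - a ! k))\<^sup>2)"

lemma factor_norm_sq:
  fixes r b :: complex
  shows "(cmod (r - b))\<^sup>2 - (cmod (1 - cnj b * r))\<^sup>2 = ((cmod r)\<^sup>2 - 1) * (1 - (cmod b)\<^sup>2)"
  apply (simp add: cmod_power2)
  apply (simp add: power2_eq_square algebra_simps)
  done

lemma factor_norm_eq:
  fixes r b :: complex
  assumes "cmod r = 1"
  shows "cmod (1 - cnj b * r) = cmod (r - b)"
proof -
  have "(cmod (r - b))\<^sup>2 = (cmod (1 - cnj b * r))\<^sup>2" using factor_norm_sq[of r b] assms by simp
  thus ?thesis by (simp add: power2_eq_iff_nonneg)
qed

lemma factor_norm_less:
  fixes r b :: complex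
  assumes "cmod r < 1" "cmod b < 1"
  shows "cmod (r - b) < cmod (1 - cnj b * r)"
proof -
  have "(cmod r)\<^sup>2 < 1" using assms by (simp add: power_less_one_iff abs_square_less_1)
  moreover have "(cmod b)\<^sup>2 < 1" using assms by (simp add: abs_square_less_1)
  ultimately have "(cmod (r - b))\<^sup>2 < (cmod (1 - cnj b * r))\<^sup>2"
    using factor_norm_sq[of r b] mult_neg_pos[of "(cmod r)\<^sup>2 - 1" "1 - (cmod b)\<^sup>2"] by linarith
  thus ?thesis using power2_less_imp_less by fastforce
qed

lemma factor_norm_greater:
  fixes r b :: complex
  assumes "cmod r > 1" "cmod b < 1"
  shows "cmod (r - b) > cmod (1 - cnj b * r)"
proof -
  have "(cmod r)\<^sup>2 > 1" using assms by (simp add: one_less_power)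
  moreover have "(cmod b)\<^sup>2 < 1" using assms by (simp add: abs_square_less_1)
  ultimately have "(cmod (r - b))\<^sup>2 > (cmod (1 - cnj b * r))\<^sup>2"
    using factor_norm_sq[of r b] mult_pos_pos[of "(cmod r)\<^sup>2 - 1" "1 - (cmod b)\<^sup>2"] by linarith
  thus ?thesis using power2_less_imp_less by fastforce
qed

lemma term_identity:
  fixes z b :: complex
  assumes "cmod z = 1" "z \<noteq> b"
  shows "z / (z - b) + z * cnj b / (1 - cnj b * z) = of_real ((1 - (cmod b)\<^sup>2) / (cmod (z - b))\<^sup>2)"
proof -
  have zz: "z * cnj z = 1" using assms(1) by (simp add: complex_norm_square[symmetric])
  have w: "z - b \<noteq> 0" using assms by simp
  have cw: "cnj (z - b) \<noteq> 0" using w by simp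
  have e1: "1 - cnj b * z = z * cnj (z - b)" using zz by (simp add: algebra_simps)
  have z0: "z \<noteq> 0" using assms by auto
  have e2: "of_real ((cmod (z - b))\<^sup>2) = (z - b) * cnj (z - b)" by (rule complex_norm_square)
  have e3: "of_real ((cmod b)\<^sup>2) = b * cnj b" by (rule complex_norm_square)
  have "z / (z - b) + z * cnj b / (1 - cnj b * z) = z / (z - b) + cnj b / cnj (z - b)"
    using z0 by (simp add: e1)
  also have "\<dots> = (z * cnj (z - b) + cnj b * (z - b)) / ((z - b) * cnj (z - b))"
    using w cw by (simp add: field_simps)
  also have "z * cnj (z - b) + cnj b * (z - b) = 1 - b * cnj b"
    using zz by (simp add: algebra_simps)
  finally show ?thesis using e2 e3 w
    by (simp add: of_real_divide of_real_diff)
qed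



lemma blaschke_eq: "blaschke \<alpha> a z = \<alpha> * Ap a z / Dp a z"
  unfolding blaschke_def Ap_def Dp_def by (simp add: prod_dividef)

lemma blaschke_fun: "blaschke \<alpha> a = (\<lambda>z. \<alpha> * Ap a z / Dp a z)"
  by (rule ext) (rule blaschke_eq)

lemma Ap_nz:
  assumes A: "\<forall>k<length a. cmod (a!k) < 1" and z: "cmod z \<ge> 1"
  shows "Ap a z \<noteq> 0"
proof -
  have "z - a!k \<noteq> 0" if "k < length a" for k
    using A that z by force
  thus ?thesis unfolding Ap_def by (subst prod_zero_iff) auto
qed

lemma Dp_nz:
  assumes A: "\<forall>k<length a. cmod (a!k) < 1" and z: "cmod z \<le> 1"
  shows "Dp a z \<noteq> 0"
proof -
  have "1 - cnj (a!k) * z \<noteq> 0" if "k < length a" for k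
  proof
    assume "1 - cnj (a!k) * z = 0"
    hence "cnj (a!k) * z = 1" by simp
    hence c1: "cmod (cnj (a!k) * z) = 1" by simp
    have "cmod (cnj (a!k)) * cmod z < 1"
      using A that z by (metis le_less_trans mult_left_le norm_ge_zero complex_mod_cnj)
    thus False using c1 by (simp add: norm_mult)
  qed
  thus ?thesis unfolding Dp_def by (subst prod_zero_iff) auto
qed

lemma Ap_deriv:
  assumes A: "\<forall>k<length a. cmod (a!k) < 1" and z: "cmod z = 1"
  shows "(Ap a has_field_derivative Ap a z * (\<Sum>k<length a. 1 / (z - a!k))) (at z)"
proof -
  have "((\<lambda>u. \<Prod>k\<in>{..<length a}. u - a!k) has_field_derivative
        (\<Prod>k\<in>{..<length a}. z - a!k) * (\<Sum>k\<in>{..<length a}. 1 / (z - a!k))) (at z)"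
    by (rule has_field_derivative_prod'[where f="\<lambda>k u. u - a!k"])
       (use A z in \<open>auto intro!: derivative_eq_intros\<close>)
  thus ?thesis by (simp add: Ap_def[abs_def])
qed

lemma Dp_deriv:
  assumes A: "\<forall>k<length a. cmod (a!k) < 1" and z: "cmod z = 1"
  shows "(Dp a has_field_derivative Dp a z * (\<Sum>k<length a. - cnj (a!k) / (1 - cnj (a!k) * z))) (at z)"
proof -
  have nz: "1 - cnj (a!k) * z \<noteq> 0" if "k < length a" for k
    using Dp_nz[OF A, of z] z that unfolding Dp_def by (auto simp: prod_zero_iff)
  have "((\<lambda>u. \<Prod>k\<in>{..<length a}. 1 - cnj (a!k) * u) has_field_derivative
        (\<Prod>k\<in>{..<length a}. 1 - cnj (a!k) * z) * (\<Sum>k\<in>{..<length a}. - cnj (a!k) / (1 - cnj (a!k) * z))) (at z)"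
    by (rule has_field_derivative_prod'[where f="\<lambda>k u. 1 - cnj (a!k) * u"])
       (use nz in \<open>auto intro!: derivative_eq_intros\<close>)
  thus ?thesis by (simp add: Dp_def[abs_def])
qed

lemma S_identity:
  assumes A: "\<forall>k<length a. cmod (a!k) < 1" and z: "cmod z = 1"
  shows "z * ((\<Sum>k<length a. 1 / (z - a!k)) - (\<Sum>k<length a. - cnj (a!k) / (1 - cnj (a!k) * z)))
         = of_real (Pk a z)"
proof -
  have ne: "z \<noteq> a!k" if "k < length a" for k using A z that by auto
  have "z * ((\<Sum>k<length a. 1 / (z - a!k)) - (\<Sum>k<length a. - cnj (a!k) / (1 - cnj (a!k) * z)))
      = (\<Sum>k<length a. z / (z - a!k) + z * cnj (a!k) / (1 - cnj (a!k) * z))"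
    by (simp add: sum_distrib_left sum_subtractf[symmetric] sum.distrib algebra_simps)
  also have "\<dots> = (\<Sum>k<length a. of_real ((1 - (cmod (a!k))\<^sup>2) / (cmod (z - a!k))\<^sup>2))"
    using ne z by (intro sum.cong refl term_identity) auto
  finally show ?thesis by (simp add: Pk_def)
qed

lemma Pk_nonneg:
  assumes A: "\<forall>k<length a. cmod (a!k) < 1"
  shows "Pk a z \<ge> 0"
  unfolding Pk_def using A
  by (intro sum_nonneg divide_nonneg_nonneg) (auto simp: abs_square_le_1 less_imp_le)

lemma norm_deriv_blaschke:
  assumes A: "\<forall>k<length a. cmod (a!k) < 1" and z: "cmod z = 1" and al: "cmod \<alpha> = 1"
  shows "norm (deriv (blaschke \<alpha> a) z) = Pk a z"
proof -
  define S1 where "S1 = (\<Sum>k<length a. 1 / (z - a!k))"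
  define S2 where "S2 = (\<Sum>k<length a. - cnj (a!k) / (1 - cnj (a!k) * z))"
  have D0: "Dp a z \<noteq> 0" using Dp_nz[OF A] z by simp
  have d: "((\<lambda>z. \<alpha> * Ap a z / Dp a z) has_field_derivative
      (\<alpha> * (Ap a z * S1) * Dp a z - \<alpha> * Ap a z * (Dp a z * S2)) / (Dp a z * Dp a z)) (at z)"
    using Ap_deriv[OF A z] Dp_deriv[OF A z] D0 unfolding S1_def S2_def
    by (auto intro!: derivative_eq_intros)
  have "deriv (blaschke \<alpha> a) z = (\<alpha> * (Ap a z * S1) * Dp a z - \<alpha> * Ap a z * (Dp a z * S2)) / (Dp a z * Dp a z)"
    unfolding blaschke_fun using d by (rule DERIV_imp_deriv)
  also have "\<dots> = \<alpha> * (Ap a z / Dp a z) * (S1 - S2)"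
    using D0 by (simp add: field_simps)
  finally have e: "deriv (blaschke \<alpha> a) z = \<alpha> * (Ap a z / Dp a z) * (S1 - S2)" .
  have nA: "cmod (Ap a z) = cmod (Dp a z)"
    unfolding Ap_def Dp_def prod_norm[symmetric] using factor_norm_eq[OF z] by simp
  have "z * (S1 - S2) = of_real (Pk a z)" unfolding S1_def S2_def by (rule S_identity[OF A z])
  hence "cmod (S1 - S2) = Pk a z"
    using z Pk_nonneg[OF A, of z] by (metis mult_cancel_right2 norm_mult norm_of_real abs_of_nonneg mult.commute)
  thus ?thesis using e nA D0 al by (simp add: norm_mult norm_divide)
qed



definition Apoly :: "complex list \<Rightarrow> complex poly" where
  "Apoly a = (\<Prod>k<length a. [:-(a!k), 1:])"
definition Dpoly :: "complex list \<Rightarrow> complex poly" where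
  "Dpoly a = (\<Prod>k<length a. [:1, -cnj (a!k):])"
definition Qpoly :: "complex list \<Rightarrow> complex \<Rightarrow> complex poly" where
  "Qpoly a \<eta> = pCons 0 (Apoly a) - smult \<eta> (Dpoly a)"

lemma poly_Apoly: "poly (Apoly a) z = Ap a z"
  unfolding Apoly_def Ap_def by (simp add: poly_prod)

lemma poly_Dpoly: "poly (Dpoly a) z = Dp a z"
  unfolding Dpoly_def Dp_def by (simp add: poly_prod algebra_simps)

lemma poly_Qpoly: "poly (Qpoly a \<eta>) z = z * Ap a z - \<eta> * Dp a z"
  unfolding Qpoly_def by (simp add: poly_Apoly poly_Dpoly)

lemma degree_Apoly: "degree (Apoly a) = length a"
  unfolding Apoly_def by (subst degree_prod_sum_eq) auto

lemma lead_Apoly: "lead_coeff (Apoly a) = 1"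
  unfolding Apoly_def by (simp add: lead_coeff_prod)

lemma degree_Dpoly: "degree (Dpoly a) \<le> length a"
proof -
  have "degree (Dpoly a) \<le> (\<Sum>k<length a. degree [:1, -cnj (a!k):])"
    unfolding Dpoly_def using degree_prod_sum_le[of "{..<length a}" "\<lambda>k. [:1, -cnj (a!k):]"] by (simp add: o_def)
  also have "\<dots> \<le> (\<Sum>k<length a. 1)"
    by (intro sum_mono) auto
  finally show ?thesis by simp
qed

lemma coeff_Qpoly: "coeff (Qpoly a \<eta>) (Suc (length a)) = 1"
proof -
  have "coeff (Dpoly a) (Suc (length a)) = 0"
    using degree_Dpoly[of a] by (intro coeff_eq_0) auto
  thus ?thesis unfolding Qpoly_def using lead_Apoly[of a] by (simp add: degree_Apoly)
qed

lemma degree_Qpoly: "degree (Qpoly a \<eta>) = Suc (length a)"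
proof (rule antisym)
  have "degree (pCons 0 (Apoly a)) \<le> Suc (length a)"
    using degree_pCons_le[of 0 "Apoly a"] by (simp add: degree_Apoly)
  moreover have "degree (smult \<eta> (Dpoly a)) \<le> Suc (length a)"
    using degree_Dpoly[of a] degree_smult_le[of \<eta> "Dpoly a"] by linarith
  ultimately show "degree (Qpoly a \<eta>) \<le> Suc (length a)"
    unfolding Qpoly_def using degree_diff_le by blast
  show "Suc (length a) \<le> degree (Qpoly a \<eta>)"
    using coeff_Qpoly[of a \<eta>] by (intro le_degree) simp
qed

lemma lead_Qpoly: "lead_coeff (Qpoly a \<eta>) = 1"
  using coeff_Qpoly degree_Qpoly by simp

lemma norm_Ap_Dp:
  assumes z: "cmod z = 1"
  shows "cmod (Ap a z) = cmod (Dp a z)"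
  unfolding Ap_def Dp_def prod_norm[symmetric] using factor_norm_eq[OF z] by simp

lemma root_on_circle:
  assumes A: "\<forall>k<length a. cmod (a!k) < 1" and eta: "cmod \<eta> = 1"
    and r: "poly (Qpoly a \<eta>) r = 0"
  shows "cmod r = 1"
proof -
  have eq: "r * Ap a r = \<eta> * Dp a r" using r by (simp add: poly_Qpoly)
  hence neq: "cmod r * cmod (Ap a r) = cmod (Dp a r)"
    using eta by (metis norm_mult mult_1)
  show ?thesis
  proof (cases "cmod r < 1")
    case True
    have le: "cmod (Ap a r) \<le> cmod (Dp a r)"
      unfolding Ap_def Dp_def prod_norm[symmetric]
      using A True by (intro prod_mono) (auto intro: less_imp_le factor_norm_less)
    have "Dp a r \<noteq> 0" using Dp_nz[OF A] True by simp
    hence pos: "cmod (Dp a r) > 0" by simp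
    have "cmod r * cmod (Ap a r) \<le> cmod r * cmod (Dp a r)"
      by (rule mult_left_mono[OF le]) simp
    also have "\<dots> < cmod (Dp a r)"
      using True pos mult_strict_right_mono[of "cmod r" 1 "cmod (Dp a r)"] by simp
    finally have "cmod r * cmod (Ap a r) < cmod (Dp a r)" .
    thus ?thesis using neq by simp
  next
    case False
    show ?thesis
    proof (rule ccontr)
      assume "cmod r \<noteq> 1"
      hence gt: "cmod r > 1" using False by simp
      have le: "cmod (Dp a r) \<le> cmod (Ap a r)"
        unfolding Ap_def Dp_def prod_norm[symmetric]
        using A gt by (intro prod_mono) (auto intro: less_imp_le factor_norm_greater)
      have "Ap a r \<noteq> 0" using Ap_nz[OF A] gt by simp
      hence "cmod (Ap a r) < cmod r * cmod (Ap a r)"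
        using gt mult_strict_right_mono[of 1 "cmod r" "cmod (Ap a r)"] by simp
      thus False using neq le by simp
    qed
  qed
qed

lemma pderiv_Qpoly_root:
  assumes A: "\<forall>k<length a. cmod (a!k) < 1" and z: "cmod z = 1"
    and r: "poly (Qpoly a \<eta>) z = 0"
  shows "poly (pderiv (Qpoly a \<eta>)) z = Ap a z * (1 + of_real (Pk a z))"
proof -
  define S1 where "S1 = (\<Sum>k<length a. 1 / (z - a!k))"
  define S2 where "S2 = (\<Sum>k<length a. - cnj (a!k) / (1 - cnj (a!k) * z))"
  have eq: "\<eta> * Dp a z = z * Ap a z" using r by (simp add: poly_Qpoly)
  have d: "((\<lambda>z. z * Ap a z - \<eta> * Dp a z) has_field_derivative
            1 * Ap a z + z * (Ap a z * S1) - \<eta> * (Dp a z * S2)) (at z)"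
    using Ap_deriv[OF A z] Dp_deriv[OF A z] unfolding S1_def S2_def
    by (auto intro!: derivative_eq_intros)
  have fe: "(\<lambda>z. z * Ap a z - \<eta> * Dp a z) = poly (Qpoly a \<eta>)"
    by (rule ext) (simp add: poly_Qpoly)
  have "poly (pderiv (Qpoly a \<eta>)) z = 1 * Ap a z + z * (Ap a z * S1) - \<eta> * (Dp a z * S2)"
    using DERIV_unique[OF poly_DERIV d[unfolded fe]] .
  also have "\<dots> = Ap a z * (1 + z * (S1 - S2))"
    using eq by (simp add: algebra_simps)
  also have "z * (S1 - S2) = of_real (Pk a z)"
    unfolding S1_def S2_def by (rule S_identity[OF A z])
  finally show ?thesis .
qed



lemma Pk_pos_one:
  assumes "Pk a z \<ge> 0" shows "1 + of_real (Pk a z) \<noteq> (0::complex)"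
proof
  assume "1 + of_real (Pk a z) = (0::complex)"
  hence "of_real (1 + Pk a z) = (0::complex)" by simp
  hence "1 + Pk a z = 0" by (simp only: of_real_eq_0_iff)
  with assms show False by simp
qed

lemma key_identity:
  assumes A: "\<forall>k<length a. cmod (a!k) < 1" and w: "cmod w = 1"
  shows "\<exists>R. finite R \<and> w \<in> R \<and> card R = Suc (length a) \<and> (\<forall>r\<in>R. cmod r = 1)
             \<and> (\<Sum>r\<in>R. 1 / (1 + Pk a r)) = 1"
proof -
  define \<eta> where "\<eta> = w * Ap a w / Dp a w"
  define Q where "Q = Qpoly a \<eta>"
  define R where "R = {z. poly Q z = 0}"
  have Dw: "Dp a w \<noteq> 0" using Dp_nz[OF A] w by simp
  have eta: "cmod \<eta> = 1"
    unfolding \<eta>_def using norm_Ap_Dp[OF w, of a] Dw w by (simp add: norm_mult norm_divide)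
  have eta0: "\<eta> \<noteq> 0" using eta by auto
  have Rc: "cmod r = 1" if "r \<in> R" for r
    using root_on_circle[OF A eta] that by (simp add: R_def Q_def)
  have Q0: "Q \<noteq> 0"
  proof
    assume "Q = 0" hence "degree Q = 0" by simp
    thus False using degree_Qpoly[of a \<eta>] by (simp add: Q_def)
  qed
  have finR: "finite R" unfolding R_def using Q0 by (rule poly_roots_finite)
  have dQ: "poly (pderiv Q) r = Ap a r * (1 + of_real (Pk a r))" if "r \<in> R" for r
    using pderiv_Qpoly_root[OF A Rc[OF that]] that by (simp add: R_def Q_def)
  have sqf: "rsquarefree Q"
    unfolding rsquarefree_roots
  proof (intro allI notI)
    fix r assume h: "poly Q r = 0 \<and> poly (pderiv Q) r = 0"
    hence rR: "r \<in> R" by (simp add: R_def)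
    have "Ap a r \<noteq> 0" using Ap_nz[OF A] Rc[OF rR] by simp
    moreover have "1 + of_real (Pk a r) \<noteq> (0::complex)"
      using Pk_pos_one Pk_nonneg[OF A] by blast
    ultimately show False using h dQ[OF rR] by simp
  qed
  have fact: "(\<Prod>z\<in>R. [:-z, 1:]) = Q"
    using complex_poly_decompose_rsquarefree[OF sqf] lead_Qpoly[of a \<eta>]
    by (simp add: R_def Q_def)
  have polyQ: "poly Q u = (\<Prod>y\<in>R. (u - y))" for u
    by (subst fact[symmetric]) (simp add: poly_prod)
  have cardR: "card R = Suc (length a)"
  proof -
    have "degree Q = (\<Sum>z\<in>R. degree [:-z, 1:])"
      by (subst fact[symmetric], rule degree_prod_sum_eq) auto
    thus ?thesis using degree_Qpoly[of a \<eta>] by (simp add: Q_def)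
  qed
  have wR: "w \<in> R"
    using Dw by (simp add: R_def Q_def poly_Qpoly \<eta>_def)
  have Dp0: "Dp a 0 = 1" by (simp add: Dp_def)
  have Q0val: "poly Q 0 = - \<eta>" by (simp add: Q_def poly_Qpoly Dp0)
  have zR: "0 \<notin> R" using Q0val eta0 by (simp add: R_def)
  have prodd: "(\<Prod>y\<in>R-{x}. (x - y)) = poly (pderiv Q) x" if xR: "x \<in> R" for x
  proof -
    have d: "((\<lambda>u. \<Prod>y\<in>R. u - y) has_field_derivative (\<Sum>y'\<in>R. 1 * (\<Prod>y\<in>R-{y'}. x - y))) (at x)"
      by (rule has_field_derivative_prod) (auto intro!: derivative_eq_intros)
    have "(\<Sum>y'\<in>R. 1 * (\<Prod>y\<in>R-{y'}. x - y)) = (\<Prod>y\<in>R-{x}. x - y)"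
    proof -
      have "(\<Sum>y'\<in>R. 1 * (\<Prod>y\<in>R-{y'}. x - y)) = 1 * (\<Prod>y\<in>R-{x}. x - y) + (\<Sum>y'\<in>R-{x}. 1 * (\<Prod>y\<in>R-{y'}. x - y))"
        using finR xR by (simp add: sum.remove)
      also have "(\<Sum>y'\<in>R-{x}. 1 * (\<Prod>y\<in>R-{y'}. x - y)) = 0"
        using finR xR by (intro sum.neutral) (auto simp: prod_zero_iff)
      finally show ?thesis by simp
    qed
    moreover have "(\<lambda>u. \<Prod>y\<in>R. u - y) = poly Q" by (rule ext) (simp add: polyQ)
    ultimately have "(poly Q has_field_derivative (\<Prod>y\<in>R-{x}. x - y)) (at x)" using d by simp
    from DERIV_unique[OF poly_DERIV this] show ?thesis by simp
  qed
  have degD: "degree (Dpoly a) + 2 \<le> card (insert 0 R)"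
    using degree_Dpoly[of a] finR zR cardR by simp
  have L: "(\<Sum>x\<in>insert 0 R. poly (Dpoly a) x / (\<Prod>y\<in>insert 0 R-{x}. (x - y))) = 0"
    using lagrange_sum_zero[OF _ degD] finR by simp
  have t0: "poly (Dpoly a) 0 / (\<Prod>y\<in>insert 0 R-{0}. (0 - y)) = - 1 / \<eta>"
  proof -
    have "insert 0 R - {0} = R" using zR by auto
    hence "(\<Prod>y\<in>insert 0 R-{0}. (0 - y)) = poly Q 0" by (simp add: polyQ)
    thus ?thesis using Q0val by (simp add: poly_Dpoly Dp0)
  qed
  have tx: "poly (Dpoly a) x / (\<Prod>y\<in>insert 0 R-{x}. (x - y)) = 1 / (\<eta> * (1 + of_real (Pk a x)))"
    if xR: "x \<in> R" for x
  proof -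
    have x0: "x \<noteq> 0" using xR zR by auto
    have "insert 0 R - {x} = insert 0 (R - {x})" using x0 by auto
    hence "(\<Prod>y\<in>insert 0 R-{x}. (x - y)) = x * (\<Prod>y\<in>R-{x}. (x - y))"
      using finR zR by simp
    also have "\<dots> = x * (Ap a x * (1 + of_real (Pk a x)))"
      using prodd[OF xR] dQ[OF xR] by simp
    also have "x * Ap a x = \<eta> * Dp a x"
      using xR by (simp add: R_def Q_def poly_Qpoly)
    hence "x * (Ap a x * (1 + of_real (Pk a x))) = \<eta> * Dp a x * (1 + of_real (Pk a x))"
      by (simp add: algebra_simps)
    finally have e: "(\<Prod>y\<in>insert 0 R-{x}. (x - y)) = \<eta> * Dp a x * (1 + of_real (Pk a x))" .
    have Dx: "Dp a x \<noteq> 0" using Dp_nz[OF A] Rc[OF xR] by simp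
    have "1 + of_real (Pk a x) \<noteq> (0::complex)" using Pk_pos_one Pk_nonneg[OF A] by blast
    thus ?thesis using e Dx eta0 by (simp add: poly_Dpoly)
  qed
  have "0 = - 1 / \<eta> + (\<Sum>x\<in>R. 1 / (\<eta> * (1 + of_real (Pk a x))))"
    using L finR zR t0 tx by simp
  hence "(\<Sum>x\<in>R. 1 / (\<eta> * (1 + of_real (Pk a x)))) = 1 / \<eta>" by (simp add: algebra_simps)
  hence "(\<Sum>x\<in>R. 1 / (1 + of_real (Pk a x))) / \<eta> = 1 / \<eta>"
    by (simp add: sum_divide_distrib mult.commute)
  hence "(\<Sum>x\<in>R. 1 / (1 + of_real (Pk a x))) = (1::complex)"
    using eta0 by (simp add: divide_cancel_right)
  hence "of_real (\<Sum>x\<in>R. 1 / (1 + Pk a x)) = (1::complex)" by simp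
  hence "(\<Sum>x\<in>R. 1 / (1 + Pk a x)) = 1" using of_real_eq_1_iff by blast
  thus ?thesis using finR wR cardR Rc by blast
qed



lemma arith1:
  fixes p M n :: real
  assumes "M \<ge> n" "p \<ge> 0" "n \<ge> 0" "1/(1+p) + n/(1+M) \<le> 1"
  shows "n/(M - n + 1) \<le> p"
proof -
  have pM: "1 + M > 0" "1 + p > 0" "M - n + 1 > 0" using assms by auto
  have "1/(1+p) \<le> 1 - n/(1+M)" using assms(4) by simp
  also have "1 - n/(1+M) = (M - n + 1)/(1+M)" using pM by (simp add: field_simps)
  finally have "1/(1+p) \<le> (M - n + 1)/(1+M)" .
  hence "1 + M \<le> (M - n + 1) * (1 + p)" using pM by (simp add: field_simps)
  hence "n \<le> p * (M - n + 1)" by (simp add: algebra_simps)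
  thus ?thesis using pM by (simp add: field_simps)
qed

lemma arith2:
  fixes p m n :: real
  assumes "m \<ge> 0" "p \<ge> 0" "1 \<le> 1/(1+p) + n/(1+m)"
  shows "p * (1 + m - n) \<le> n"
proof -
  have pm: "1 + m > 0" "1 + p > 0" using assms by auto
  have "(1+p)*(1+m) * 1 \<le> (1+p)*(1+m) * (1/(1+p) + n/(1+m))"
    using assms(3) pm by (intro mult_left_mono) auto
  also have "\<dots> = (1+p)*(1+m)*(1/(1+p)) + (1+p)*(1+m)*(n/(1+m))" by (simp add: distrib_left)
  also have "(1+p)*(1+m)*(1/(1+p)) = 1+m" using pm by simp
  also have "(1+p)*(1+m)*(n/(1+m)) = n*(1+p)" using pm by simp
  finally show ?thesis by (simp add: algebra_simps)
qed

theorem theorem1: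
  fixes \<alpha> :: complex and a :: "complex list" and n :: nat
  assumes "is_blaschke \<alpha> a" and "n = length a" and "n \<ge> 1"
  defines "M \<equiv> blaschke_M (blaschke \<alpha> a)" and "m \<equiv> blaschke_m (blaschke \<alpha> a)"
  shows "real n / (M - real n + 1) \<le> m \<and> m \<le> real n - 1 + real n / M
         \<and> 0 < m \<and> m \<le> real n \<and> real n \<le> M"
proof -
  have al: "cmod \<alpha> = 1" and A: "\<forall>k<length a. cmod (a!k) < 1"
    using assms(1) by (auto simp: is_blaschke_def)
  define Sp where "Sp = sphere (0::complex) 1"
  have inS: "z \<in> Sp \<longleftrightarrow> cmod z = 1" for z by (simp add: Sp_def)
  have Mdef: "M = (SUP z\<in>Sp. Pk a z)"
    unfolding M_def blaschke_M_def Sp_def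
    by (intro SUP_cong refl) (simp add: norm_deriv_blaschke[OF A _ al])
  have mdef: "m = (INF z\<in>Sp. Pk a z)"
    unfolding m_def blaschke_m_def Sp_def
    by (intro INF_cong refl) (simp add: norm_deriv_blaschke[OF A _ al])
  have ne: "Sp \<noteq> {}" using inS[of 1] by auto
  have cont: "continuous_on Sp (Pk a)"
  proof -
    have "continuous_on Sp (\<lambda>z. \<Sum>k<length a. (1 - (cmod (a ! k))\<^sup>2) / (cmod (z - a ! k))\<^sup>2)"
    proof -
      have nz: "\<forall>x\<in>Sp. (cmod (x - a ! k))\<^sup>2 \<noteq> 0" if "k < length a" for k
        using A inS that by fastforce
      show ?thesis using nz by (auto intro!: continuous_intros)
    qed
    thus ?thesis by (simp add: Pk_def[abs_def])
  qed
  have "compact (Pk a ` Sp)" unfolding Sp_def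
    by (rule compact_continuous_image) (use cont in \<open>auto simp: Sp_def\<close>)
  hence bdd: "bdd_above (Pk a ` Sp)" by (auto intro: bounded_imp_bdd_above compact_imp_bounded)
  have bddb: "bdd_below (Pk a ` Sp)"
    by (rule bdd_belowI[where m=0]) (auto intro: Pk_nonneg[OF A])
  have upM: "Pk a z \<le> M" if "z \<in> Sp" for z
    unfolding Mdef using bdd that by (rule cSUP_upper2) simp
  have lom: "m \<le> Pk a z" if "z \<in> Sp" for z
    unfolding mdef using bddb that by (rule cINF_lower2) simp
  have m0: "0 \<le> m" unfolding mdef using ne Pk_nonneg[OF A] by (intro cINF_greatest) auto
  have M0: "0 \<le> M" using upM[of 1] Pk_nonneg[OF A, of 1] inS[of 1] by simp
  obtain R where R: "finite R" "1 \<in> R" "card R = Suc (length a)" "\<forall>r\<in>R. cmod r = 1"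
      "(\<Sum>r\<in>R. 1 / (1 + Pk a r)) = 1"
    using key_identity[OF A, of 1] by auto
  have "(\<Sum>r\<in>R. 1 / (1 + M)) \<le> (\<Sum>r\<in>R. 1 / (1 + Pk a r))"
    using R(4) upM inS Pk_nonneg[OF A] by (intro sum_mono divide_left_mono mult_pos_pos add_pos_nonneg) (auto simp: M0 Pk_nonneg[OF A])
  hence "real (Suc n) / (1 + M) \<le> 1" using R assms(2) by simp
  hence nM: "real n \<le> M" using M0 by (simp add: field_simps)
  have "(\<Sum>r\<in>R. 1 / (1 + Pk a r)) \<le> (\<Sum>r\<in>R. 1 / (1 + m))"
    using R(4) lom inS m0 by (intro sum_mono divide_left_mono mult_pos_pos add_pos_nonneg) (auto simp: M0 Pk_nonneg[OF A])
  hence "1 \<le> real (Suc n) / (1 + m)" using R assms(2) by simp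
  hence mn: "m \<le> real n" using m0 by (simp add: field_simps)
  have split: "1 / (1 + Pk a w) + (\<Sum>r\<in>Q-{w}. 1 / (1 + Pk a r)) = 1 \<and>
      (\<Sum>r\<in>Q-{w}. 1 / (1 + M)) \<le> (\<Sum>r\<in>Q-{w}. 1 / (1 + Pk a r)) \<and>
      (\<Sum>r\<in>Q-{w}. 1 / (1 + Pk a r)) \<le> (\<Sum>r\<in>Q-{w}. 1 / (1 + m)) \<and> card (Q - {w}) = n"
    if "finite Q" "w \<in> Q" "card Q = Suc (length a)" "\<forall>r\<in>Q. cmod r = 1"
      "(\<Sum>r\<in>Q. 1 / (1 + Pk a r)) = 1" for Q w
  proof (intro conjI)
    show "1 / (1 + Pk a w) + (\<Sum>r\<in>Q-{w}. 1 / (1 + Pk a r)) = 1"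
      using that by (simp add: sum.remove)
    show "(\<Sum>r\<in>Q-{w}. 1 / (1 + M)) \<le> (\<Sum>r\<in>Q-{w}. 1 / (1 + Pk a r))"
      using that upM inS Pk_nonneg[OF A] by (intro sum_mono divide_left_mono mult_pos_pos add_pos_nonneg) (auto simp: M0 Pk_nonneg[OF A])
    show "(\<Sum>r\<in>Q-{w}. 1 / (1 + Pk a r)) \<le> (\<Sum>r\<in>Q-{w}. 1 / (1 + m))"
      using that lom inS m0 by (intro sum_mono divide_left_mono mult_pos_pos add_pos_nonneg) (auto simp: M0 Pk_nonneg[OF A])
    show "card (Q - {w}) = n" using that assms(2) by simp
  qed
  have low: "real n / (M - real n + 1) \<le> Pk a w" if w: "w \<in> Sp" for w
  proof -
    obtain Q where Q: "finite Q" "w \<in> Q" "card Q = Suc (length a)" "\<forall>r\<in>Q. cmod r = 1"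
      "(\<Sum>r\<in>Q. 1 / (1 + Pk a r)) = 1"
      using key_identity[OF A, of w] w inS by auto
    note sp = split[OF Q]
    have c: "card (Q - {w}) = n" using sp by blast
    have "(\<Sum>r\<in>Q-{w}. 1 / (1 + M)) = real n / (1 + M)" using c by simp
    hence "1 / (1 + Pk a w) + real n / (1 + M) \<le> 1" using sp by linarith
    thus ?thesis using arith1[of n M "Pk a w"] nM Pk_nonneg[OF A] by simp
  qed
  have lowm: "real n / (M - real n + 1) \<le> m"
    unfolding mdef using ne low by (intro cINF_greatest) auto
  have up: "Pk a w * (1 + m - real n) \<le> real n" if w: "w \<in> Sp" for w
  proof -
    obtain Q where Q: "finite Q" "w \<in> Q" "card Q = Suc (length a)" "\<forall>r\<in>Q. cmod r = 1"
      "(\<Sum>r\<in>Q. 1 / (1 + Pk a r)) = 1"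
      using key_identity[OF A, of w] w inS by auto
    note sp = split[OF Q]
    have c: "card (Q - {w}) = n" using sp by blast
    have "(\<Sum>r\<in>Q-{w}. 1 / (1 + m)) = real n / (1 + m)" using c by simp
    hence "1 \<le> 1 / (1 + Pk a w) + real n / (1 + m)" using sp by linarith
    thus ?thesis using arith2[of m "Pk a w" n] m0 Pk_nonneg[OF A] by simp
  qed
  have Mpos: "M > 0" using nM assms(3) by simp
  have upm: "m \<le> real n - 1 + real n / M"
  proof (cases "1 + m - real n > 0")
    case False
    have "real n / M \<ge> 0" using Mpos by simp
    thus ?thesis using False by linarith
  next
    case True
    have "M \<le> real n / (1 + m - real n)"
      unfolding Mdef using ne
    proof (intro cSUP_least)
      fix w assume "w \<in> Sp"
      thus "Pk a w \<le> real n / (1 + m - real n)" using up[of w] True by (simp add: field_simps)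
    qed auto
    hence "M * (1 + m - real n) \<le> real n" using True by (simp add: field_simps)
    hence "1 + m - real n \<le> real n / M" using Mpos by (simp add: field_simps)
    thus ?thesis by simp
  qed
  have mpos: "0 < m"
  proof -
    have "0 < real n / (M - real n + 1)" using nM assms(3) by simp
    thus ?thesis using lowm by linarith
  qed
  show ?thesis using lowm upm mpos mn nM by blast
qed


end
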